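(* Let $p$ be a prime, $q$ a power of $p$, and $F$ a field of characteristic $p$ containing $\mathbb{F}_q$. Let $L\in F[x]$ be a monic $q$-polynomial of $q$-degree $n$ such that: (1) $L(x)/x$ is irreducible over $F$; (2) $L$ is not a $q^s$-polynomial for any integer $s>1$; (3) $L=x^{q^n}+a_{n-k}x^{q^{n-k}}+\cdots+a_0x$ with $1\leq k\leq n$ and $a_{n-k}\neq0$ (so the coefficients of $x^{q^{n-1}},\dots,x^{q^{n-k+1}}$ vanish). Let $V$ be the space of roots of $L$ in a splitting field $E$ of $L$ over $F$, and let $\alpha,\beta\in V$ be linearly independent over $\mathbb{F}_q$. If $d$ is a positive integer such that $\alpha^d,\alpha^{d-1}\beta,\dots,\beta^d$ are linearly dependent over $\mathbb{F}_q$, then $d\geq q^k+1$.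
   Context: A $q$-polynomial of $q$-degree $n$ is $\sum_{i=0}^n a_ix^{q^i}$ with $a_n\neq0$; it is a $q^s$-polynomial if only exponents $q^j$ with $s\mid j$ occur. *)

theory Defs
  imports "HOL-Computational_Algebra.Computational_Algebra"
begin

definition is_field_hom :: "('f::field \<Rightarrow> 'e::field) \<Rightarrow> bool" where
  "is_field_hom \<phi> \<longleftrightarrow> \<phi> 1 = 1 \<and> (\<forall>a b. \<phi> (a + b) = \<phi> a + \<phi> b) \<and> (\<forall>a b. \<phi> (a * b) = \<phi> a * \<phi> b)"

definition is_subfield :: "'e::field set \<Rightarrow> bool" where
  "is_subfield K \<longleftrightarrow> 0 \<in> K \<and> 1 \<in> K \<and> (\<forall>a\<in>K. \<forall>b\<in>K. a + b \<in> K \<and> a * b \<in> K \<and> - a \<in> K)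
      \<and> (\<forall>a\<in>K. a \<noteq> 0 \<longrightarrow> inverse a \<in> K)"

definition splits :: "'e::field poly \<Rightarrow> bool" where
  "splits P \<longleftrightarrow> (\<exists>rs. P = smult (lead_coeff P) (\<Prod>r\<leftarrow>rs. [:- r, 1:]))"

text \<open>E (the whole type 'e) is a splitting field of L over F, F embedded via \<phi>.\<close>
definition is_splitting_field :: "('f::field \<Rightarrow> 'e::field) \<Rightarrow> 'f poly \<Rightarrow> bool" where
  "is_splitting_field \<phi> L \<longleftrightarrow> is_field_hom \<phi> \<and> splits (map_poly \<phi> L) \<and>
     (\<forall>K. is_subfield K \<and> range \<phi> \<subseteq> K \<and> {x. poly (map_poly \<phi> L) x = 0} \<subseteq> K \<longrightarrow> K = UNIV)"

definition is_qs_poly :: "nat \<Rightarrow> nat \<Rightarrow> 'a::zero poly \<Rightarrow> bool" where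
  "is_qs_poly q s L \<longleftrightarrow> (\<forall>m. coeff L m \<noteq> 0 \<longrightarrow> (\<exists>j. s dvd j \<and> m = q ^ j))"

definition is_q_poly :: "nat \<Rightarrow> 'a::zero poly \<Rightarrow> bool" where
  "is_q_poly q L \<longleftrightarrow> is_qs_poly q 1 L"

text \<open>The copy of F_q inside a field: the roots of x^q - x.\<close>
definition Fq_in :: "nat \<Rightarrow> 'a::field set" where
  "Fq_in q = {c. c ^ q = c}"

definition contains_Fq :: "nat \<Rightarrow> 'a::field itself \<Rightarrow> bool" where
  "contains_Fq q _ \<longleftrightarrow> card (Fq_in q :: 'a set) = q"

end

theory Submission
  imports Defs
begin

context
  fixes \<phi> :: "'f::field \<Rightarrow> 'e::field"
  assumes hom: "is_field_hom \<phi>"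
begin

lemma hom_1: "\<phi> 1 = 1" using hom by (simp add: is_field_hom_def)
lemma hom_add: "\<phi> (a + b) = \<phi> a + \<phi> b" using hom by (simp add: is_field_hom_def)
lemma hom_mult: "\<phi> (a * b) = \<phi> a * \<phi> b" using hom by (simp add: is_field_hom_def)
lemma hom_0: "\<phi> 0 = 0"
proof -
  have "\<phi> 0 = \<phi> 0 + \<phi> 0" using hom_add[of 0 0] by simp
  then show ?thesis by (metis add_cancel_right_right)
qed
lemma hom_uminus: "\<phi> (- a) = - \<phi> a"
proof -
  have "\<phi> (-a) + \<phi> a = 0" using hom_add[of "-a" a] hom_0 by simp
  then show ?thesis by (simp add: eq_neg_iff_add_eq_0)
qed
lemma hom_diff: "\<phi> (a - b) = \<phi> a - \<phi> b"
  using hom_add[of a "-b"] hom_uminus[of b] by simp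
lemma hom_power: "\<phi> (a ^ n) = \<phi> a ^ n"
  by (induction n) (simp_all add: hom_1 hom_mult)
lemma hom_sum: "\<phi> (sum f A) = (\<Sum>x\<in>A. \<phi> (f x))"
  by (induction A rule: infinite_finite_induct) (simp_all add: hom_0 hom_add)
lemma hom_eq0: "\<phi> a = 0 \<longleftrightarrow> a = 0"
proof
  assume h: "\<phi> a = 0"
  show "a = 0"
  proof (rule ccontr)
    assume "a \<noteq> 0"
    then have "\<phi> a * \<phi> (inverse a) = 1" using hom_mult[of a "inverse a"] hom_1 by simp
    with h show False by simp
  qed
qed (simp add: hom_0)
lemma hom_inj: "\<phi> a = \<phi> b \<longleftrightarrow> a = b"
  using hom_eq0[of "a - b"] hom_diff[of a b] by auto
lemma hom_divide: "\<phi> (a / b) = \<phi> a / \<phi> b"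
proof (cases "b = 0")
  case True then show ?thesis by (simp add: hom_0)
next
  case False
  have "\<phi> (a / b) * \<phi> b = \<phi> a" using hom_mult[of "a/b" b] False by simp
  moreover have "\<phi> b \<noteq> 0" using False hom_eq0 by simp
  ultimately show ?thesis by (simp add: field_simps)
qed

lemma coeff_map_hom: "coeff (map_poly \<phi> p) i = \<phi> (coeff p i)"
  by (simp add: coeff_map_poly hom_0)

lemma map_hom_add: "map_poly \<phi> (p + q) = map_poly \<phi> p + map_poly \<phi> q"
  by (rule poly_eqI) (simp add: coeff_map_hom hom_add)

lemma map_hom_mult: "map_poly \<phi> (p * q) = map_poly \<phi> p * map_poly \<phi> q"
  by (rule poly_eqI) (simp add: coeff_map_hom coeff_mult hom_sum hom_mult)

lemma poly_map_hom_add: "poly (map_poly \<phi> (p + q)) x = poly (map_poly \<phi> p) x + poly (map_poly \<phi> q) x"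
  by (simp add: map_hom_add)

lemma poly_map_hom_mult: "poly (map_poly \<phi> (p * q)) x = poly (map_poly \<phi> p) x * poly (map_poly \<phi> q) x"
  by (simp add: map_hom_mult)

lemma poly_map_hom: "poly (map_poly \<phi> p) x = (\<Sum>i\<le>degree p. \<phi> (coeff p i) * x ^ i)"
proof -
  have "degree (map_poly \<phi> p) = degree p"
    by (rule degree_map_poly) (simp add: hom_eq0)
  then show ?thesis by (simp add: poly_altdef coeff_map_hom)
qed

lemma vs_hom: "vector_space (\<lambda>c x. \<phi> c * x)"
  by unfold_locales (simp_all add: algebra_simps hom_add hom_mult hom_1)

end

theorem theorem7p8:
  fixes p q n k d :: nat
    and L :: "'f::field poly"
    and \<phi> :: "'f \<Rightarrow> 'e::field"
    and \<alpha> \<beta> :: 'e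
  assumes p_prime: "prime p"
    and q_pow: "\<exists>m>0. q = p ^ m"
    and char_F: "CHAR('f) = p"
    and Fq_sub: "contains_Fq q TYPE('f)"
    and qpoly: "is_q_poly q L"
    and qdeg: "degree L = q ^ n"
    and monic: "lead_coeff L = 1"
    and irred: "irreducible (L div [:0, 1:])"
    and not_qs: "\<forall>s::nat. s > 1 \<longrightarrow> \<not> is_qs_poly q s L"
    and k_range: "1 \<le> k" "k \<le> n"
    and gap: "\<forall>j. 1 \<le> j \<and> j < k \<longrightarrow> coeff L (q ^ (n - j)) = 0"
    and a_nk: "coeff L (q ^ (n - k)) \<noteq> 0"
    and split: "is_splitting_field \<phi> L"
    and \<alpha>_root: "poly (map_poly \<phi> L) \<alpha> = 0"
    and \<beta>_root: "poly (map_poly \<phi> L) \<beta> = 0"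
    and lin_indep: "\<forall>a\<in>Fq_in q. \<forall>b\<in>Fq_in q. a * \<alpha> + b * \<beta> = 0 \<longrightarrow> a = 0 \<and> b = 0"
    and d_pos: "d > 0"
    and dep: "\<exists>c::nat \<Rightarrow> 'e. (\<forall>i\<le>d. c i \<in> Fq_in q) \<and> (\<exists>i\<le>d. c i \<noteq> 0) \<and>
                 (\<Sum>i\<le>d. c i * \<alpha> ^ (d - i) * \<beta> ^ i) = 0"
  shows "d \<ge> q ^ k + 1"
proof (rule ccontr)
  assume "\<not> d \<ge> q ^ k + 1"
  hence d_le: "d \<le> q ^ k" by simp
  have hom: "is_field_hom \<phi>" using split by (simp add: is_splitting_field_def)
  obtain m where m: "m > 0" "q = p ^ m" using q_pow by blast
  have p2: "p \<ge> 2" using p_prime prime_ge_2_nat by blast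
  have q2: "q \<ge> 2"
  proof -
    have "p ^ 1 \<le> p ^ m" using m(1) p2 by (intro power_increasing) auto
    then show ?thesis using m(2) p2 by simp
  qed
  have ofnat: "\<And>x. (of_nat x :: 'e) = \<phi> (of_nat x)"
  proof -
    fix x show "(of_nat x :: 'e) = \<phi> (of_nat x)"
      by (induction x) (simp_all add: hom_0[OF hom] hom_1[OF hom] hom_add[OF hom])
  qed
  have charE: "CHAR('e) = p"
  proof -
    have "\<And>x. CHAR('e) dvd x \<longleftrightarrow> CHAR('f) dvd x"
    proof -
      fix x
      have "(of_nat x :: 'e) = 0 \<longleftrightarrow> (of_nat x :: 'f) = 0"
        using ofnat hom_eq0[OF hom] by metis
      then show "CHAR('e) dvd x \<longleftrightarrow> CHAR('f) dvd x"
        by (simp add: of_nat_eq_0_iff_char_dvd)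
    qed
    then have "CHAR('e) = CHAR('f)" by (meson dvd_antisym dvd_refl)
    then show ?thesis using char_F by simp
  qed
  have frob_add: "\<And>x y::'e. (x + y) ^ q = x ^ q + y ^ q"
    using freshmans_dream' charE p_prime m(2) by blast
  have neg1: "(-1::'e) ^ q = -1"
  proof -
    have "(1 + (-1::'e)) ^ q = 1 ^ q + (-1) ^ q" by (rule frob_add)
    moreover have "(0::'e) ^ q = 0" using q2 by simp
    ultimately have "0 = 1 + (-1::'e) ^ q" by simp
    then show ?thesis by (simp add: eq_neg_iff_add_eq_0 add.commute)
  qed
  have frob_inj: "\<And>x y::'e. x ^ q = y ^ q \<Longrightarrow> x = y"
  proof -
    fix x y :: 'e assume h: "x ^ q = y ^ q"
    have "(x + (-1) * y) ^ q = x ^ q + ((-1) * y) ^ q" by (rule frob_add)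
    also have "\<dots> = x ^ q - y ^ q" by (simp only: power_mult_distrib neg1) simp
    finally have "(x - y) ^ q = 0" using h by simp
    then show "x = y" by simp
  qed
  have frob_inj_pow: "\<And>t x y::'e. x ^ (q ^ t) = y ^ (q ^ t) \<Longrightarrow> x = y"
  proof -
    fix t
    show "\<And>x y::'e. x ^ (q ^ t) = y ^ (q ^ t) \<Longrightarrow> x = y"
    proof (induction t)
      case 0 then show ?case by simp
    next
      case (Suc t)
      have "(x ^ (q ^ t)) ^ q = (y ^ (q ^ t)) ^ q"
        using Suc.prems by (simp add: power_mult[symmetric] mult.commute)
      then show ?case using frob_inj Suc.IH by blast
    qed
  qed
  have Fq_E: "(Fq_in q :: 'e set) = \<phi> ` Fq_in q"
  proof -
    define P :: "'e poly" where "P = monom 1 q - [:0, 1:]"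
    have degP: "degree P = q" unfolding P_def using q2
      using degree_add_eq_left[of "- [:0, 1:]" "monom (1::'e) q"]
      by (simp add: degree_monom_eq diff_conv_add_uminus del: add_uminus_conv_diff)
    have P0: "P \<noteq> 0" using degP q2 by auto
    have FqP: "(Fq_in q :: 'e set) = {x. poly P x = 0}"
      by (auto simp: P_def Fq_in_def poly_monom)
    have finE: "finite (Fq_in q :: 'e set)" using FqP poly_roots_finite[OF P0] by simp
    have cardE: "card (Fq_in q :: 'e set) \<le> q" using FqP card_poly_roots_bound[OF P0] degP by simp
    have cardF: "card (Fq_in q :: 'f set) = q" using Fq_sub by (simp add: contains_Fq_def)
    have sub: "\<phi> ` Fq_in q \<subseteq> (Fq_in q :: 'e set)"
      by (auto simp: Fq_in_def hom_power[OF hom, symmetric])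
    have "inj_on \<phi> (Fq_in q)" using hom_inj[OF hom] by (auto simp: inj_on_def)
    then have "card (\<phi> ` Fq_in q) = q" using cardF by (simp add: card_image)
    then show ?thesis using card_seteq[OF finE sub] cardE by simp
  qed
  have one_Fq: "(1::'e) \<in> Fq_in q" by (simp add: Fq_in_def)
  have zero_Fq: "(0::'e) \<in> Fq_in q" using q2 by (simp add: Fq_in_def)
  have neg1_Fq: "(-1::'e) \<in> Fq_in q" using neg1 by (simp add: Fq_in_def)
  have \<alpha>0: "\<alpha> \<noteq> 0" using lin_indep one_Fq zero_Fq by fastforce
  define \<gamma> where "\<gamma> = \<beta> / \<alpha>"
  have \<beta>\<gamma>: "\<beta> = \<gamma> * \<alpha>" using \<alpha>0 by (simp add: \<gamma>_def)
  obtain c where c: "\<forall>i\<le>d. c i \<in> Fq_in q" "\<exists>i\<le>d. c i \<noteq> 0"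
    "(\<Sum>i\<le>d. c i * \<alpha> ^ (d - i) * \<beta> ^ i) = 0" using dep by blast
  have csum: "(\<Sum>i\<le>d. c i * \<gamma> ^ i) = 0"
  proof -
    have "(\<Sum>i\<le>d. c i * \<alpha> ^ (d - i) * \<beta> ^ i) = \<alpha> ^ d * (\<Sum>i\<le>d. c i * \<gamma> ^ i)"
      unfolding sum_distrib_left
    proof (rule sum.cong)
      fix i assume "i \<in> {..d}"
      then have "\<alpha> ^ d = \<alpha> ^ (d - i) * \<alpha> ^ i" by (simp add: power_add[symmetric])
      then show "c i * \<alpha> ^ (d - i) * \<beta> ^ i = \<alpha> ^ d * (c i * \<gamma> ^ i)"
        by (simp add: \<beta>\<gamma> power_mult_distrib)
    qed simp
    then show ?thesis using c(3) \<alpha>0 by simp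
  qed
  define e where "e = (GREATEST i. i \<le> d \<and> c i \<noteq> 0)"
  have ex_e: "\<exists>i. (\<lambda>i. i \<le> d \<and> c i \<noteq> 0) i" using c(2) by blast
  have bnd_e: "\<And>y. (\<lambda>i. i \<le> d \<and> c i \<noteq> 0) y \<Longrightarrow> y \<le> d" by blast
  have e: "e \<le> d" "c e \<noteq> 0" "\<And>i. e < i \<Longrightarrow> i \<le> d \<Longrightarrow> c i = 0"
  proof -
    show "e \<le> d" "c e \<noteq> 0" using GreatestI_ex_nat[OF ex_e bnd_e] by (simp_all add: e_def)
    fix i assume "e < i" "i \<le> d"
    show "c i = 0"
    proof (rule ccontr)
      assume "c i \<noteq> 0"
      then have "i \<le> e" unfolding e_def using \<open>i \<le> d\<close>
        by (intro Greatest_le_nat[of "\<lambda>i. i \<le> d \<and> c i \<noteq> 0" i d]) auto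
      then show False using \<open>e < i\<close> by simp
    qed
  qed
  have csum2: "(\<Sum>i\<le>e. c i * \<gamma> ^ i) = 0"
  proof -
    have "(\<Sum>i\<le>d. c i * \<gamma> ^ i) = (\<Sum>i\<le>e. c i * \<gamma> ^ i)"
      by (rule sum.mono_neutral_right) (use e in auto)
    then show ?thesis using csum by simp
  qed
  have e1: "e \<ge> 1"
  proof (rule ccontr)
    assume "\<not> e \<ge> 1" then have "e = 0" by simp
    then show False using csum2 e(2) by simp
  qed
  have "\<forall>i. \<exists>x. i \<le> d \<longrightarrow> c i = \<phi> x"
  proof
    fix i show "\<exists>x. i \<le> d \<longrightarrow> c i = \<phi> x"
    proof (cases "i \<le> d")
      case True
      then have "c i \<in> \<phi> ` Fq_in q" using c(1) Fq_E by blast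
      then show ?thesis by blast
    qed simp
  qed
  then obtain f where f0: "\<forall>i. i \<le> d \<longrightarrow> c i = \<phi> (f i)" by metis
  have f: "\<And>i. i \<le> d \<Longrightarrow> c i = \<phi> (f i)" using f0 by blast
  obtain g where g: "\<gamma> ^ e = (\<Sum>i<e. \<phi> (g i) * \<gamma> ^ i)"
  proof -
    define g where "g i = - f i / f e" for i
    have fe: "\<phi> (f e) \<noteq> 0" using e f by simp
    have "(\<Sum>i\<le>e. c i * \<gamma> ^ i) = (\<Sum>i<e. c i * \<gamma> ^ i) + c e * \<gamma> ^ e"
      by (simp add: lessThan_Suc_atMost[symmetric])
    then have h0: "(\<Sum>i<e. c i * \<gamma> ^ i) = - c e * \<gamma> ^ e"
      using csum2 by (simp add: eq_neg_iff_add_eq_0)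
    have "(\<Sum>i<e. c i * \<gamma> ^ i) = (\<Sum>i<e. \<phi> (f i) * \<gamma> ^ i)"
      by (rule sum.cong) (use f e(1) in auto)
    then have h: "(\<Sum>i<e. \<phi> (f i) * \<gamma> ^ i) = - \<phi> (f e) * \<gamma> ^ e"
      using h0 f[OF e(1)] by simp
    have "(\<Sum>i<e. \<phi> (g i) * \<gamma> ^ i) = (\<Sum>i<e. (- 1 / \<phi> (f e)) * (\<phi> (f i) * \<gamma> ^ i))"
      by (rule sum.cong) (simp_all add: g_def hom_divide[OF hom] hom_uminus[OF hom])
    also have "\<dots> = \<gamma> ^ e" unfolding sum_distrib_left[symmetric] h using fe by simp
    finally show ?thesis using that by metis
  qed
  interpret V: vector_space "\<lambda>c (x::'e). \<phi> c * x" by (rule vs_hom[OF hom])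
  define R where "R = V.span ((\<lambda>t. \<gamma> ^ t) ` {..<e})"
  have R_add: "\<And>x y. x \<in> R \<Longrightarrow> y \<in> R \<Longrightarrow> x + y \<in> R" unfolding R_def by (rule V.span_add)
  have R_neg: "\<And>x. x \<in> R \<Longrightarrow> - x \<in> R" unfolding R_def by (rule V.span_neg)
  have R_scale: "\<And>c x. x \<in> R \<Longrightarrow> \<phi> c * x \<in> R" unfolding R_def by (rule V.span_scale)
  have R_base: "\<And>t. t < e \<Longrightarrow> \<gamma> ^ t \<in> R" unfolding R_def by (intro V.span_base) auto
  have R_phi: "\<And>c. \<phi> c \<in> R"
  proof -
    fix c
    have "\<gamma> ^ 0 \<in> R" using R_base[of 0] e1 by linarith
    then have "\<phi> c * \<gamma> ^ 0 \<in> R" by (rule R_scale)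
    then show "\<phi> c \<in> R" by simp
  qed
  have R_gamma: "\<And>x. x \<in> R \<Longrightarrow> \<gamma> * x \<in> R"
  proof -
    fix x assume "x \<in> R"
    then show "\<gamma> * x \<in> R" unfolding R_def
    proof (induction rule: V.span_induct_alt)
      case base then show ?case by (simp add: V.span_zero)
    next
      case (step c x y)
      then obtain t where t: "t < e" "x = \<gamma> ^ t" by blast
      have gx: "\<gamma> * x \<in> R"
      proof (cases "Suc t < e")
        case True then show ?thesis using t R_base[of "Suc t"] by (simp del: power_Suc add: power_Suc[symmetric])
      next
        case False
        then have "Suc t = e" using t by simp
        then have "\<gamma> * x = \<gamma> ^ e" using t by (metis power_Suc)
        then have "\<gamma> * x = (\<Sum>i<e. \<phi> (g i) * \<gamma> ^ i)" using g by simp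
        also have "\<dots> \<in> R" unfolding R_def
          by (intro V.span_sum V.span_scale V.span_base) auto
        finally show ?thesis .
      qed
      have "\<gamma> * (\<phi> c * x + y) = \<phi> c * (\<gamma> * x) + \<gamma> * y" by (simp add: algebra_simps)
      then show ?case using gx step(2) R_scale R_add unfolding R_def by metis
    qed
  qed
  have R_pow: "\<And>t. \<gamma> ^ t \<in> R"
  proof -
    fix t show "\<gamma> ^ t \<in> R"
      by (induction t) (use R_phi[of 1] hom_1[OF hom] R_gamma in auto)
  qed
  have R_powmult: "\<And>t y. y \<in> R \<Longrightarrow> \<gamma> ^ t * y \<in> R"
  proof -
    fix t y assume "y \<in> R"
    then show "\<gamma> ^ t * y \<in> R"
      by (induction t) (use R_gamma in \<open>auto simp: mult.assoc\<close>)
  qed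
  have R_mult: "\<And>x y. x \<in> R \<Longrightarrow> y \<in> R \<Longrightarrow> x * y \<in> R"
  proof -
    fix x y assume x: "x \<in> R" and y: "y \<in> R"
    from x show "x * y \<in> R" unfolding R_def
    proof (induction rule: V.span_induct_alt)
      case base then show ?case by (simp add: V.span_zero)
    next
      case (step c x' z)
      then obtain t where t: "x' = \<gamma> ^ t" by blast
      have "(\<phi> c * x' + z) * y = \<phi> c * (\<gamma> ^ t * y) + z * y" using t by (simp add: algebra_simps)
      then show ?case using R_powmult[OF y, of t] step(2) R_scale R_add unfolding R_def by metis
    qed
  qed
  define a where "a j = coeff L (q ^ j)" for j
  have qinj: "inj (\<lambda>j. q ^ j)" using q2 by (auto simp: inj_on_def)
  have coeffL: "\<And>i. coeff L i \<noteq> 0 \<Longrightarrow> \<exists>j\<le>n. i = q ^ j"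
  proof -
    fix i assume h: "coeff L i \<noteq> 0"
    then obtain j where j: "i = q ^ j" using qpoly by (auto simp: is_q_poly_def is_qs_poly_def)
    have "q ^ j \<le> q ^ n" using le_degree[OF h] qdeg j by simp
    then have "j \<le> n" using q2 by (simp add: power_le_imp_le_exp)
    then show "\<exists>j\<le>n. i = q ^ j" using j by blast
  qed
  have Leval: "\<And>x. poly (map_poly \<phi> L) x = (\<Sum>j\<le>n. \<phi> (a j) * x ^ (q ^ j))"
  proof -
    fix x
    have "poly (map_poly \<phi> L) x = (\<Sum>i\<le>q ^ n. \<phi> (coeff L i) * x ^ i)"
      using poly_map_hom[OF hom] qdeg by simp
    also have "\<dots> = (\<Sum>i\<in>(\<lambda>j. q ^ j) ` {..n}. \<phi> (coeff L i) * x ^ i)"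
    proof (rule sum.mono_neutral_right)
      show "(\<lambda>j. q ^ j) ` {..n} \<subseteq> {..q ^ n}" using q2 by (auto intro: power_increasing)
      show "\<forall>i\<in>{..q ^ n} - (\<lambda>j. q ^ j) ` {..n}. \<phi> (coeff L i) * x ^ i = 0"
      proof
        fix i assume i: "i \<in> {..q ^ n} - (\<lambda>j. q ^ j) ` {..n}"
        have "coeff L i = 0"
        proof (rule ccontr)
          assume "coeff L i \<noteq> 0"
          then obtain j where "j \<le> n" "i = q ^ j" using coeffL by blast
          then show False using i by blast
        qed
        then show "\<phi> (coeff L i) * x ^ i = 0" using hom_0[OF hom] by simp
      qed
    qed simp
    also have "\<dots> = (\<Sum>j\<le>n. \<phi> (a j) * x ^ (q ^ j))"
      by (subst sum.reindex) (use qinj in \<open>auto simp: a_def inj_on_def\<close>)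
    finally show "poly (map_poly \<phi> L) x = (\<Sum>j\<le>n. \<phi> (a j) * x ^ (q ^ j))" .
  qed
  have an: "a n = 1" using monic qdeg by (simp add: a_def)
  have a_gap: "\<And>j. n - k < j \<Longrightarrow> j < n \<Longrightarrow> a j = 0"
  proof -
    fix j assume "n - k < j" "j < n"
    then have "1 \<le> n - j \<and> n - j < k" by auto
    then have "coeff L (q ^ (n - (n - j))) = 0" using gap by blast
    then show "a j = 0" using \<open>j < n\<close> by (simp add: a_def)
  qed
  have n1: "n \<ge> 1" using k_range by simp
  have coeff0: "coeff L 0 = 0"
  proof (rule ccontr)
    assume "coeff L 0 \<noteq> 0"
    then obtain j where "0 = q ^ j" using coeffL by blast
    then show False using q2 by simp
  qed
  define Q where "Q = L div [:0, 1:]"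
  have LQ: "L = [:0, 1:] * Q"
  proof -
    have "[:0, 1:] dvd L" using coeff0 by (simp add: dvd_iff_poly_eq_0 poly_0_coeff_0)
    then show ?thesis unfolding Q_def by (metis dvd_mult_div_cancel)
  qed
  have L0: "L \<noteq> 0" using monic by auto
  have Q0: "Q \<noteq> 0" using L0 LQ by auto
  have degQ: "degree Q = q ^ n - 1"
  proof -
    have "degree L = degree [:0, 1::'f:] + degree Q" using LQ Q0 by (metis degree_mult_eq pCons_eq_0_iff zero_neq_one)
    then show ?thesis using qdeg by simp
  qed
  have irrQ: "irreducible Q" using irred by (simp add: Q_def)
  have a0: "a 0 \<noteq> 0"
  proof
    assume "a 0 = 0"
    then have c1: "coeff Q 0 = 0" using LQ by (simp add: a_def coeff_pCons_0)
    have "[:0, 1:] dvd Q" using c1 by (simp add: dvd_iff_poly_eq_0 poly_0_coeff_0)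
    then obtain W where W: "Q = [:0, 1:] * W" by (elim dvdE)
    have "\<not> is_unit [:0, 1::'f:]" by (simp add: is_unit_poly_iff)
    then have "is_unit W" using irreducibleD[OF irrQ W] by blast
    then have "degree W = 0" using Q0 W by (simp add: is_unit_iff_degree)
    then have "degree Q = 1" using W Q0 by (simp add: degree_mult_eq)
    then have qn: "q ^ n = 2" using degQ q2 by (metis add_diff_inverse_nat less_one nat_1_add_1 not_less one_le_power power_0 le_trans)
    have "n = 1"
    proof (rule ccontr)
      assume "n \<noteq> 1"
      then have "q ^ 2 \<le> q ^ n" using n1 q2 by (intro power_increasing) auto
      moreover have "2 * 2 \<le> q * q" using q2 by (intro mult_le_mono) auto
      ultimately show False using qn by (simp add: power2_eq_square)
    qed
    then have "k = 1" using k_range by simp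
    then show False using a_nk \<open>a 0 = 0\<close> \<open>n = 1\<close> by (simp add: a_def)
  qed
  define B where "B j = \<phi> (a j) * (\<gamma> ^ (q ^ j) - \<gamma> ^ (q ^ n))" for j
  have Bsum: "(\<Sum>j\<le>n-k. B j * \<alpha> ^ (q ^ j)) = 0"
  proof -
    have "0 = poly (map_poly \<phi> L) (\<gamma> * \<alpha>) - \<gamma> ^ (q ^ n) * poly (map_poly \<phi> L) \<alpha>"
      using \<alpha>_root \<beta>_root \<beta>\<gamma> by simp
    also have "\<dots> = (\<Sum>j\<le>n. B j * \<alpha> ^ (q ^ j))"
      unfolding Leval sum_distrib_left sum_subtractf[symmetric]
      by (rule sum.cong) (simp_all add: B_def power_mult_distrib algebra_simps)
    also have "\<dots> = (\<Sum>j\<le>n-k. B j * \<alpha> ^ (q ^ j))"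
    proof (rule sum.mono_neutral_right)
      show "\<forall>j\<in>{..n} - {..n - k}. B j * \<alpha> ^ q ^ j = 0"
      proof
        fix j assume j: "j \<in> {..n} - {..n - k}"
        show "B j * \<alpha> ^ q ^ j = 0"
        proof (cases "j = n")
          case True then show ?thesis by (simp add: B_def)
        next
          case False then show ?thesis using j a_gap[of j] hom_0[OF hom] by (simp add: B_def)
        qed
      qed
    qed auto
    finally show ?thesis by simp
  qed
  have Bnz: "\<exists>j\<le>n-k. B j \<noteq> 0"
  proof (rule ccontr)
    assume "\<not> (\<exists>j\<le>n-k. B j \<noteq> 0)"
    then have B0: "\<And>j. j \<le> n - k \<Longrightarrow> B j = 0" by blast
    have agam: "\<And>j. j \<le> n \<Longrightarrow> a j \<noteq> 0 \<Longrightarrow> \<gamma> ^ (q ^ j) = \<gamma> ^ (q ^ n)"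
    proof -
      fix j assume j: "j \<le> n" "a j \<noteq> 0"
      show "\<gamma> ^ (q ^ j) = \<gamma> ^ (q ^ n)"
      proof (cases "j \<le> n - k")
        case True
        then have "B j = 0" by (rule B0)
        moreover have "\<phi> (a j) \<noteq> 0" using j hom_eq0[OF hom] by simp
        ultimately show ?thesis by (simp add: B_def)
      next
        case False
        then show ?thesis using j a_gap[of j] by (cases "j = n") auto
      qed
    qed
    define G where "G = {t. \<gamma> ^ (q ^ t) = \<gamma>}"
    have G_sub: "\<And>x y. x \<in> G \<Longrightarrow> y \<in> G \<Longrightarrow> y \<le> x \<Longrightarrow> x - y \<in> G"
    proof -
      fix x y assume x: "x \<in> G" and y: "y \<in> G" and yx: "y \<le> x"
      have "q ^ x = q ^ (x - y) * q ^ y" using yx by (simp add: power_add[symmetric])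
      then have "(\<gamma> ^ (q ^ (x - y))) ^ (q ^ y) = \<gamma> ^ (q ^ x)" by (simp add: power_mult)
      also have "\<dots> = \<gamma> ^ (q ^ y)" using x y by (simp add: G_def)
      finally show "x - y \<in> G" using frob_inj_pow by (simp add: G_def)
    qed
    have G_nj: "\<And>j. j < n \<Longrightarrow> a j \<noteq> 0 \<Longrightarrow> n - j \<in> G"
    proof -
      fix j assume j: "j < n" "a j \<noteq> 0"
      have "q ^ n = q ^ (n - j) * q ^ j" using j by (simp add: power_add[symmetric])
      then have "(\<gamma> ^ (q ^ (n - j))) ^ (q ^ j) = \<gamma> ^ (q ^ n)" by (simp add: power_mult)
      also have "\<dots> = \<gamma> ^ (q ^ j)" using agam[of j] j by simp
      finally show "n - j \<in> G" using frob_inj_pow by (simp add: G_def)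
    qed
    have nG: "n \<in> G" using G_nj[of 0] a0 n1 by simp
    define g where "g = (LEAST t. 0 < t \<and> t \<in> G)"
    have g: "0 < g" "g \<in> G" using LeastI[of "\<lambda>t. 0 < t \<and> t \<in> G" n] nG n1 by (simp_all add: g_def)
    have g_le: "\<And>t. 0 < t \<Longrightarrow> t \<in> G \<Longrightarrow> g \<le> t" unfolding g_def by (rule Least_le) simp
    have Gmod: "\<And>t. t \<in> G \<Longrightarrow> t mod g \<in> G"
    proof -
      fix t show "t \<in> G \<Longrightarrow> t mod g \<in> G"
      proof (induction t rule: less_induct)
        case (less t)
        show ?case
        proof (cases "t < g")
          case True then show ?thesis using less.prems by simp
        next
          case False
          then have "t - g \<in> G" using G_sub less.prems g by simp
          then have "(t - g) mod g \<in> G" using less.IH g(1) False by simp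
          then show ?thesis using False by (simp add: le_mod_geq)
        qed
      qed
    qed
    have Gdvd: "\<And>t. t \<in> G \<Longrightarrow> g dvd t"
    proof -
      fix t assume "t \<in> G"
      then have "t mod g \<in> G" by (rule Gmod)
      moreover have "t mod g < g" using g(1) by simp
      ultimately have "t mod g = 0" using g_le[of "t mod g"] by (meson leD neq0_conv)
      then show "g dvd t" by (simp add: dvd_eq_mod_eq_0)
    qed
    have "is_qs_poly q g L" unfolding is_qs_poly_def
    proof (intro allI impI)
      fix i assume "coeff L i \<noteq> 0"
      then obtain j where j: "j \<le> n" "i = q ^ j" using coeffL by blast
      then have aj: "a j \<noteq> 0" using \<open>coeff L i \<noteq> 0\<close> by (simp add: a_def)
      have "g dvd j"
      proof (cases "j = n")
        case True then show ?thesis using Gdvd nG by simp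
      next
        case False
        then have "g dvd n - j" using Gdvd G_nj[of j] j aj by simp
        moreover have "g dvd n" using Gdvd nG by simp
        ultimately have "g dvd n - (n - j)" by (simp add: dvd_diff_nat)
        then show ?thesis using j by simp
      qed
      then show "\<exists>j. g dvd j \<and> i = q ^ j" using j by blast
    qed
    then have "\<not> g > 1" using not_qs by blast
    then have "g = 1" using g(1) by simp
    then have "\<gamma> ^ q = \<gamma>" using g(2) by (simp add: G_def)
    then have "\<gamma> \<in> Fq_in q" by (simp add: Fq_in_def)
    moreover have "\<gamma> * \<alpha> + (-1) * \<beta> = 0" using \<beta>\<gamma> by simp
    ultimately show False using lin_indep neg1_Fq by fastforce
  qed
  define j0 where "j0 = (GREATEST j. j \<le> n-k \<and> B j \<noteq> 0)"
  have ex_j: "\<exists>j. (\<lambda>j. j \<le> n-k \<and> B j \<noteq> 0) j" using Bnz by blast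
  have bnd_j: "\<And>y. (\<lambda>j. j \<le> n-k \<and> B j \<noteq> 0) y \<Longrightarrow> y \<le> n-k" by blast
  have j0: "j0 \<le> n-k" "B j0 \<noteq> 0" "\<And>j. j0 < j \<Longrightarrow> j \<le> n-k \<Longrightarrow> B j = 0"
  proof -
    show "j0 \<le> n-k" "B j0 \<noteq> 0" using GreatestI_ex_nat[OF ex_j bnd_j] by (simp_all add: j0_def)
    fix i assume "j0 < i" "i \<le> n-k"
    show "B i = 0"
    proof (rule ccontr)
      assume "B i \<noteq> 0"
      then have "i \<le> j0" unfolding j0_def using \<open>i \<le> n-k\<close>
        by (intro Greatest_le_nat[of "\<lambda>j. j \<le> n-k \<and> B j \<noteq> 0" i "n-k"]) auto
      then show False using \<open>j0 < i\<close> by simp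
    qed
  qed
  have Bsum2: "(\<Sum>j\<le>j0. B j * \<alpha> ^ (q ^ j)) = 0"
  proof -
    have "(\<Sum>j\<le>n-k. B j * \<alpha> ^ (q ^ j)) = (\<Sum>j\<le>j0. B j * \<alpha> ^ (q ^ j))"
      by (rule sum.mono_neutral_right) (use j0 in auto)
    then show ?thesis using Bsum by simp
  qed
  have Bsum3: "(\<Sum>j\<le>j0. B j * \<alpha> ^ (q ^ j - 1)) = 0"
  proof -
    have "\<alpha> * (\<Sum>j\<le>j0. B j * \<alpha> ^ (q ^ j - 1)) = (\<Sum>j\<le>j0. B j * \<alpha> ^ (q ^ j))"
      unfolding sum_distrib_left
    proof (rule sum.cong)
      fix j
      have "Suc (q ^ j - 1) = q ^ j" using q2 by simp
      then have "\<alpha> * \<alpha> ^ (q ^ j - 1) = \<alpha> ^ (q ^ j)" by (metis power_Suc)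
      then show "\<alpha> * (B j * \<alpha> ^ (q ^ j - 1)) = B j * \<alpha> ^ (q ^ j)" by (simp add: algebra_simps)
    qed simp
    then show ?thesis using Bsum2 \<alpha>0 by simp
  qed
  have j0pos: "j0 \<ge> 1"
  proof (rule ccontr)
    assume "\<not> j0 \<ge> 1" then have "j0 = 0" by simp
    then show False using Bsum3 j0(2) by simp
  qed
  define N where "N = q ^ j0 - 1"
  define b where "b = B j0"
  have bN: "b * \<alpha> ^ N = - (\<Sum>j<j0. B j * \<alpha> ^ (q ^ j - 1))"
  proof -
    have "(\<Sum>j\<le>j0. B j * \<alpha> ^ (q ^ j - 1)) = (\<Sum>j<j0. B j * \<alpha> ^ (q ^ j - 1)) + b * \<alpha> ^ N"
      by (simp add: lessThan_Suc_atMost[symmetric] b_def N_def)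
    then show ?thesis using Bsum3 by (simp add: eq_neg_iff_add_eq_0 add.commute)
  qed
  have Nlt: "\<And>j. j < j0 \<Longrightarrow> q ^ j - 1 < N"
  proof -
    fix j assume "j < j0"
    then have "q ^ j < q ^ j0" using q2 by (intro power_strict_increasing) auto
    moreover have "q ^ j \<ge> 1" using q2 by simp
    ultimately show "q ^ j - 1 < N" unfolding N_def by linarith
  qed
  have N1: "N \<ge> 1"
  proof -
    have "q ^ 1 \<le> q ^ j0" using q2 j0pos by (intro power_increasing) auto
    then show ?thesis using q2 unfolding N_def by simp
  qed
  have BR: "\<And>j. B j \<in> R"
  proof -
    fix j
    have "\<gamma> ^ (q ^ j) - \<gamma> ^ (q ^ n) \<in> R" using R_pow R_add R_neg by (metis diff_conv_add_uminus)
    then show "B j \<in> R" unfolding B_def by (rule R_scale)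
  qed
  define Ms where "Ms = (\<lambda>(t,s). \<gamma> ^ t * \<alpha> ^ s) ` ({..<e} \<times> {..<N})"
  define M where "M = V.span Ms"
  define D where "D = q ^ n - 1"
  have M_add: "\<And>x y. x \<in> M \<Longrightarrow> y \<in> M \<Longrightarrow> x + y \<in> M" unfolding M_def by (rule V.span_add)
  have M_scale: "\<And>c x. x \<in> M \<Longrightarrow> \<phi> c * x \<in> M" unfolding M_def by (rule V.span_scale)
  have M_R: "\<And>r s. r \<in> R \<Longrightarrow> s < N \<Longrightarrow> r * \<alpha> ^ s \<in> M"
  proof -
    fix r s assume r: "r \<in> R" and s: "s < N"
    from r show "r * \<alpha> ^ s \<in> M" unfolding R_def
    proof (induction rule: V.span_induct_alt)
      case base then show ?case by (simp add: M_def V.span_zero)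
    next
      case (step c x y)
      then obtain t where t: "t < e" "x = \<gamma> ^ t" by blast
      have "x * \<alpha> ^ s \<in> M" unfolding M_def Ms_def using t s
        by (intro V.span_base) (auto intro!: image_eqI[of _ _ "(t, s)"])
      moreover have "(\<phi> c * x + y) * \<alpha> ^ s = \<phi> c * (x * \<alpha> ^ s) + y * \<alpha> ^ s"
        by (simp add: algebra_simps)
      ultimately show ?case using step(2) M_add M_scale by metis
    qed
  qed
  have M_step: "\<And>z. z \<in> M \<Longrightarrow> b * \<alpha> * z \<in> M"
  proof -
    fix z assume "z \<in> M"
    then show "b * \<alpha> * z \<in> M" unfolding M_def
    proof (induction rule: V.span_induct_alt)
      case base then show ?case by (simp add: V.span_zero)
    next
      case (step c x y)
      from step(1) obtain ts where ts0: "ts \<in> {..<e} \<times> {..<N}" "x = (\<lambda>(t,s). \<gamma> ^ t * \<alpha> ^ s) ts"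
        unfolding Ms_def by (rule imageE)
      obtain t s where ts: "t < e" "s < N" "x = \<gamma> ^ t * \<alpha> ^ s"
        using ts0 by (cases ts) auto
      have bx: "b * \<alpha> * x \<in> M"
      proof (cases "Suc s < N")
        case True
        have "b * \<alpha> * x = (b * \<gamma> ^ t) * \<alpha> ^ Suc s" using ts by (simp add: algebra_simps)
        moreover have "b * \<gamma> ^ t \<in> R" using R_mult BR R_pow unfolding b_def by blast
        ultimately show ?thesis using M_R[of "b * \<gamma> ^ t" "Suc s"] True by metis
      next
        case False
        then have sN: "Suc s = N" using ts by simp
        have "b * \<alpha> * x = \<gamma> ^ t * (b * \<alpha> ^ N)" using ts sN[symmetric] by (simp add: algebra_simps)
        also have "\<dots> = (\<Sum>j<j0. (- (\<gamma> ^ t * B j)) * \<alpha> ^ (q ^ j - 1))"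
          unfolding bN sum_distrib_left sum_negf[symmetric] by (rule sum.cong) (simp_all add: mult.assoc)
        also have "\<dots> \<in> M" unfolding M_def
        proof (rule V.span_sum)
          fix j assume "j \<in> {..<j0}"
          then have "q ^ j - 1 < N" using Nlt by simp
          moreover have "- (\<gamma> ^ t * B j) \<in> R" using R_neg R_mult R_pow BR by blast
          ultimately show "(- (\<gamma> ^ t * B j)) * \<alpha> ^ (q ^ j - 1) \<in> V.span Ms"
            using M_R unfolding M_def by blast
        qed
        finally show ?thesis .
      qed
      have "b * \<alpha> * (\<phi> c * x + y) = \<phi> c * (b * \<alpha> * x) + b * \<alpha> * y" by (simp add: algebra_simps)
      moreover have "\<phi> c * (b * \<alpha> * x) + b * \<alpha> * y \<in> M"
        using bx step(2) M_add M_scale unfolding M_def by blast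
      ultimately show ?case unfolding M_def by simp
    qed
  qed
  have bR: "\<And>i. b ^ i \<in> R"
  proof -
    fix i show "b ^ i \<in> R"
      by (induction i) (use R_phi[of 1] hom_1[OF hom] R_mult BR b_def in auto)
  qed
  have M_pow: "\<And>i s. s < N + i \<Longrightarrow> b ^ i * \<alpha> ^ s \<in> M"
  proof -
    fix i show "\<And>s. s < N + i \<Longrightarrow> b ^ i * \<alpha> ^ s \<in> M"
    proof (induction i)
      case 0
      then show ?case using M_R[of 1] R_phi[of 1] hom_1[OF hom] by simp
    next
      case (Suc i s)
      show ?case
      proof (cases s)
        case 0
        then show ?thesis using M_R[OF bR[of "Suc i"], of 0] N1 by simp
      next
        case (Suc s')
        then have "b ^ i * \<alpha> ^ s' \<in> M" using Suc.IH Suc.prems by simp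
        then have "b * \<alpha> * (b ^ i * \<alpha> ^ s') \<in> M" by (rule M_step)
        then show ?thesis using Suc by (simp add: algebra_simps)
      qed
    qed
  qed
  have mapX: "map_poly \<phi> [:0, 1:] = [:0, 1:]" by (simp add: map_poly_pCons hom_0[OF hom] hom_1[OF hom])
  have Q\<alpha>: "poly (map_poly \<phi> Q) \<alpha> = 0"
  proof -
    have "poly (map_poly \<phi> L) \<alpha> = \<alpha> * poly (map_poly \<phi> Q) \<alpha>"
      using poly_map_hom_mult[OF hom, of "[:0, 1:]" Q \<alpha>] LQ mapX by simp
    then show ?thesis using \<alpha>_root \<alpha>0 by simp
  qed
  have indep_alpha: "\<And>f. (\<Sum>s<D. \<phi> (f s) * \<alpha> ^ s) = 0 \<Longrightarrow> \<forall>s<D. f s = 0"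
  proof (rule ccontr)
    fix f assume sum0: "(\<Sum>s<D. \<phi> (f s) * \<alpha> ^ s) = 0" and "\<not> (\<forall>s<D. f s = 0)"
    then obtain s0 where s0: "s0 < D" "f s0 \<noteq> 0" by blast
    define P where "P = (\<Sum>s<D. monom (f s) s)"
    have coeffP: "\<And>i. coeff P i = (if i < D then f i else 0)"
      by (simp add: P_def coeff_sum coeff_monom)
    have P0: "P \<noteq> 0" using coeffP[of s0] s0 by auto
    have degP: "degree P < D"
    proof -
      have "degree P \<le> D - 1" by (rule degree_le) (use coeffP in auto)
      then show ?thesis using s0 by linarith
    qed
    have P\<alpha>: "poly (map_poly \<phi> P) \<alpha> = 0"
    proof -
      have "poly (map_poly \<phi> P) \<alpha> = (\<Sum>i\<le>degree P. \<phi> (coeff P i) * \<alpha> ^ i)" by (rule poly_map_hom[OF hom])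
      also have "\<dots> = (\<Sum>i<D. \<phi> (coeff P i) * \<alpha> ^ i)"
      proof (rule sum.mono_neutral_left)
        show "\<forall>i\<in>{..<D} - {..degree P}. \<phi> (coeff P i) * \<alpha> ^ i = 0"
        proof
          fix i assume "i \<in> {..<D} - {..degree P}"
          then have "degree P < i" by simp
          then have "coeff P i = 0" by (rule coeff_eq_0)
          then show "\<phi> (coeff P i) * \<alpha> ^ i = 0" using hom_0[OF hom] by simp
        qed
      qed (use degP in auto)
      also have "\<dots> = (\<Sum>s<D. \<phi> (f s) * \<alpha> ^ s)" by (rule sum.cong) (simp_all add: coeffP)
      finally show ?thesis using sum0 by simp
    qed
    define ev where "ev p = poly (map_poly \<phi> p) \<alpha>" for p
    have evP: "ev P = 0" using P\<alpha> by (simp add: ev_def)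
    have ex: "\<exists>m. \<exists>p. p \<noteq> 0 \<and> ev p = 0 \<and> degree p = m"
      using P0 evP by blast
    define m0 where "m0 = (LEAST m. \<exists>p. p \<noteq> 0 \<and> ev p = 0 \<and> degree p = m)"
    have "\<exists>p. p \<noteq> 0 \<and> ev p = 0 \<and> degree p = m0"
      unfolding m0_def by (rule LeastI_ex[OF ex])
    then obtain P1 where P1: "P1 \<noteq> 0" "ev P1 = 0" "degree P1 = m0" by blast
    have P1min: "\<And>p. p \<noteq> 0 \<Longrightarrow> ev p = 0 \<Longrightarrow> m0 \<le> degree p"
    proof -
      fix p assume "p \<noteq> 0" "ev p = 0"
      then have "\<exists>p'. p' \<noteq> 0 \<and> ev p' = 0 \<and> degree p' = degree p" by blast
      then show "m0 \<le> degree p" unfolding m0_def by (rule Least_le)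
    qed
    have "m0 \<le> degree P" by (rule P1min[OF P0 evP])
    have modz: "Q mod P1 = 0"
    proof (rule ccontr)
      assume nz: "Q mod P1 \<noteq> 0"
      have "ev Q = ev ((Q div P1) * P1 + Q mod P1)" by (simp only: div_mult_mod_eq)
      also have "\<dots> = ev (Q div P1) * ev P1 + ev (Q mod P1)"
        unfolding ev_def poly_map_hom_add[OF hom] poly_map_hom_mult[OF hom] ..
      finally have "ev Q = ev (Q div P1) * ev P1 + ev (Q mod P1)" .
      moreover have "ev Q = 0" using Q\<alpha> by (simp add: ev_def)
      ultimately have "ev (Q mod P1) = 0" using P1(2) by (metis add_0 mult_zero_right)
      then have "m0 \<le> degree (Q mod P1)" by (rule P1min[OF nz])
      moreover have "degree (Q mod P1) < degree P1" using P1(1) nz by (rule degree_mod_less')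
      ultimately show False using P1(3) by simp
    qed
    then have "P1 dvd Q" by (simp add: mod_eq_0_iff_dvd)
    then obtain w where w: "Q = P1 * w" by (elim dvdE)
    have "is_unit P1 \<or> is_unit w" by (rule irreducibleD[OF irrQ w])
    then show False
    proof
      assume uG: "is_unit P1"
      from uG[unfolded is_unit_poly_iff] obtain c where c0: "P1 = [:c:]" "c dvd 1" by blast
      have c: "P1 = [:c:]" "c \<noteq> 0" using c0 by auto
      have "ev P1 = \<phi> c" using c by (simp add: ev_def hom_0[OF hom] map_poly_pCons)
      then show False using c hom_eq0[OF hom] P1(2) by simp
    next
      assume uw: "is_unit w"
      have "P1 * w dvd P1" using mult_unit_dvd_iff[OF uw, of P1 P1] by simp
      then have "Q dvd P1" using w by simp
      then have "degree Q \<le> degree P1" using P1(1) by (rule dvd_imp_degree_le)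
      moreover have "degree P < D" by (rule degP)
      moreover have "degree Q = D" using degQ D_def by simp
      ultimately show False using P1(3) \<open>m0 \<le> degree P\<close> by linarith
    qed
  qed
  define T where "T = (\<lambda>s. b ^ D * \<alpha> ^ s) ` {..<D}"
  have TM: "T \<subseteq> M"
  proof
    fix v assume "v \<in> T"
    then obtain s where s: "s < D" "v = b ^ D * \<alpha> ^ s" unfolding T_def by blast
    have "s < N + D" using s by simp
    then show "v \<in> M" using M_pow s(2) by blast
  qed
  have b0: "b \<noteq> 0" using j0(2) b_def by simp
  have injT: "inj_on (\<lambda>s. b ^ D * \<alpha> ^ s) {..<D}"
  proof (rule inj_onI, rule ccontr)
    fix s s' assume s: "s \<in> {..<D}" and s': "s' \<in> {..<D}"
      and eq: "b ^ D * \<alpha> ^ s = b ^ D * \<alpha> ^ s'" and ne: "s \<noteq> s'"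
    have eq2: "\<alpha> ^ s = \<alpha> ^ s'" using eq b0 by simp
    define f where "f i = (if i = s then 1 else 0) - (if i = s' then 1 else (0::'f))" for i
    have "\<And>i. \<phi> (f i) * \<alpha> ^ i = (if i = s then \<alpha> ^ i else 0) - (if i = s' then \<alpha> ^ i else 0)"
      by (simp add: f_def hom_diff[OF hom] hom_1[OF hom] hom_0[OF hom] algebra_simps)
    then have "(\<Sum>i<D. \<phi> (f i) * \<alpha> ^ i) = \<alpha> ^ s - \<alpha> ^ s'"
      using s s' by (simp add: sum_subtractf)
    then have "(\<Sum>i<D. \<phi> (f i) * \<alpha> ^ i) = 0" using eq2 by simp
    then have "f s = 0" using indep_alpha s by blast
    then show False using ne by (simp add: f_def)
  qed
  have indepT: "\<not> V.dependent T"
  proof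
    assume "V.dependent T"
    then obtain t u v where t: "finite t" "t \<subseteq> T" "(\<Sum>v\<in>t. \<phi> (u v) * v) = 0"
      and v: "v \<in> t" "u v \<noteq> 0"
      unfolding V.dependent_explicit by blast
    define h where "h s = b ^ D * \<alpha> ^ s" for s
    define U where "U = {s\<in>{..<D}. h s \<in> t}"
    have tU: "t = h ` U" using t(2) unfolding U_def T_def h_def by auto
    have injU: "inj_on h U" using injT unfolding U_def h_def by (rule inj_on_subset) auto
    define f where "f s = (if s \<in> U then u (h s) else 0)" for s
    have "(\<Sum>v\<in>t. \<phi> (u v) * v) = (\<Sum>s\<in>U. \<phi> (u (h s)) * h s)"
      unfolding tU by (rule sum.reindex[OF injU, unfolded comp_def])
    also have "\<dots> = b ^ D * (\<Sum>s\<in>U. \<phi> (u (h s)) * \<alpha> ^ s)"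
      by (simp add: sum_distrib_left h_def algebra_simps)
    also have "(\<Sum>s\<in>U. \<phi> (u (h s)) * \<alpha> ^ s) = (\<Sum>s<D. \<phi> (f s) * \<alpha> ^ s)"
    proof (rule sum.mono_neutral_cong_left)
      show "\<forall>i\<in>{..<D} - U. \<phi> (f i) * \<alpha> ^ i = 0" by (simp add: f_def hom_0[OF hom])
    qed (auto simp: U_def f_def)
    finally have "(\<Sum>s<D. \<phi> (f s) * \<alpha> ^ s) = 0" using t(3) b0 by simp
    then have fz: "\<forall>s<D. f s = 0" by (rule indep_alpha)
    obtain s where s: "s \<in> U" "v = h s" using v(1) tU by blast
    have "f s = u v" using s by (simp add: f_def)
    then show False using fz s v(2) unfolding U_def by auto
  qed
  have finMs: "finite Ms" unfolding Ms_def by simp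
  have "card T \<le> card Ms"
    using V.independent_span_bound[OF finMs indepT] TM unfolding M_def by blast
  moreover have "card T = D" using injT by (simp add: T_def card_image)
  moreover have "card Ms \<le> e * N"
  proof -
    have "card Ms \<le> card ({..<e} \<times> {..<N})" unfolding Ms_def by (rule card_image_le) simp
    then show ?thesis by (simp add: card_cartesian_product)
  qed
  ultimately have "D \<le> e * N" by linarith
  moreover have "e * N < D"
  proof -
    define A where "A = q ^ k"
    define C where "C = q ^ (n - k)"
    have qn: "q ^ n = A * C" unfolding A_def C_def using k_range by (simp add: power_add[symmetric])
    have A2: "A \<ge> 2"
    proof -
      have "q ^ 1 \<le> q ^ k" using q2 k_range by (intro power_increasing) auto
      then show ?thesis using q2 A_def by simp
    qed
    have C1: "C \<ge> 1" using q2 C_def by simp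
    have "q ^ j0 \<le> C" unfolding C_def using q2 j0(1) by (intro power_increasing) auto
    then have NC: "N \<le> C - 1" unfolding N_def by simp
    have eA: "e \<le> A" using e(1) d_le A_def by simp
    have "e * N \<le> A * (C - 1)" using eA NC by (rule mult_le_mono)
    also have "\<dots> = A * C - A" by (simp add: right_diff_distrib')
    finally have "e * N \<le> A * C - A" .
    moreover have "A * C \<ge> A" using C1 by simp
    ultimately show ?thesis unfolding D_def qn using A2 by linarith
  qed
  ultimately show False by linarith
qed

end
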